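(* Let $k\ge1$ and let $\alpha_1,\dots,\alpha_{k+1}>0$ be real; put $\beta_j=\alpha_{j+1}+\alpha_{j+2}+\dots+\alpha_k+\alpha_{k+1}$ for $j=1,\dots,k$. Let $(x_1,\dots,x_k)$ have the type-1 Dirichlet density $$f_1(x_1,\dots,x_k)=\frac{\Gamma(\alpha_1+\dots+\alpha_{k+1})}{\Gamma(\alpha_1)\cdots\Gamma(\alpha_{k+1})}x_1^{\alpha_1-1}\cdots x_k^{\alpha_k-1}(1-x_1-\dots-x_k)^{\alpha_{k+1}-1}$$ on $\{0<x_j<1,\ 0<x_1+\dots+x_k<1\}$ and $0$ elsewhere. Let $(v_1,\dots,v_k)$ be a vector of positive real random variables with an arbitrary joint density $f(v_1,\dots,v_k)$ on $(0,\infty)^k$, independent of $(x_1,\dots,x_k)$. Let $y_j=\dfrac{x_j}{1-x_1-\dots-x_{j-1}}$ (with denominator $1$ for $j=1$), let $u_j=v_j/y_j$, $j=1,\dots,k$, and let $g(u_1,\dots,u_k)$ be the joint density of $(u_1,\dots,u_k)$. Then, for (almost every) $(u_1,\dots,u_k)\in(0,\infty)^k$, $$I_{u_j,j=1,\dots,k}^{(\alpha_j,\beta_j),j=1,\dots,k}f(u_1,\dots,u_k)=\Big\{\prod_{j=1}^k\frac{\Gamma(\alpha_j)}{\Gamma(\alpha_j+\beta_j)}\Big\}g(u_1,\dots,u_k).$$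
   Context: The multivariable Kober fractional integral operator of the first kind is defined, for parameters $\zeta_j$ and $\alpha_j>0$, by $$I_{u_j,j=1,\dots,k}^{(\zeta_j,\alpha_j),j=1,\dots,k}f(u_1,\dots,u_k)=\Big\{\prod_{j=1}^k\frac{u_j^{-\zeta_j-\alpha_j}}{\Gamma(\alpha_j)}\Big\}\int_{0}^{u_1}\cdots\int_{0}^{u_k}\Big\{\prod_{j=1}^k(u_j-v_j)^{\alpha_j-1}v_j^{\zeta_j}\Big\}f(v_1,\dots,v_k)\,dv_1\cdots dv_k;$$ here it is applied with $\zeta_j=\alpha_j$ and $\alpha_j$ replaced by $\beta_j$. *)

theory Defs
  imports "HOL-Probability.Probability"
begin

abbreviation lebk :: "nat \<Rightarrow> (nat \<Rightarrow> real) measure" where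
  "lebk k \<equiv> PiM {1..k} (\<lambda>_. lborel)"

definition dirichlet1_density :: "nat \<Rightarrow> (nat \<Rightarrow> real) \<Rightarrow> (nat \<Rightarrow> real) \<Rightarrow> real" where
  "dirichlet1_density k \<alpha> x =
     (if (\<forall>j\<in>{1..k}. 0 < x j \<and> x j < 1) \<and> 0 < (\<Sum>j=1..k. x j) \<and> (\<Sum>j=1..k. x j) < 1
      then Gamma (\<Sum>j=1..k+1. \<alpha> j) / (\<Prod>j=1..k+1. Gamma (\<alpha> j))
           * (\<Prod>j=1..k. x j powr (\<alpha> j - 1))
           * (1 - (\<Sum>j=1..k. x j)) powr (\<alpha> (k+1) - 1)
      else 0)"

definition dir_y :: "(nat \<Rightarrow> real) \<Rightarrow> nat \<Rightarrow> real" where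
  "dir_y x j = x j / (1 - (\<Sum>i\<in>{1..<j}. x i))"

definition dir_beta :: "nat \<Rightarrow> (nat \<Rightarrow> real) \<Rightarrow> nat \<Rightarrow> real" where
  "dir_beta k \<alpha> j = (\<Sum>i=j+1..k+1. \<alpha> i)"

definition kober1 :: "nat \<Rightarrow> (nat \<Rightarrow> real) \<Rightarrow> (nat \<Rightarrow> real) \<Rightarrow> ((nat \<Rightarrow> real) \<Rightarrow> real)
    \<Rightarrow> (nat \<Rightarrow> real) \<Rightarrow> real" where
  "kober1 k \<zeta> a f u =
     (\<Prod>j=1..k. u j powr (- \<zeta> j - a j) / Gamma (a j)) *
     set_lebesgue_integral (lebk k)
       {v \<in> space (lebk k). \<forall>j\<in>{1..k}. 0 < v j \<and> v j < u j}
       (\<lambda>v. (\<Prod>j=1..k. (u j - v j) powr (a j - 1) * v j powr \<zeta> j) * f v)"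

end

theory Submission
  imports Defs
begin

lemma scale1:
  fixes c :: real assumes "c > 0" and [measurable]: "G \<in> borel_measurable borel"
  shows "(\<integral>\<^sup>+y. G y \<partial>lborel) = ennreal c * (\<integral>\<^sup>+y. G (c * y) \<partial>lborel)"
  using nn_integral_real_affine[of G c 0] assms by simp

lemma scaleN:
  assumes "finite I"
  shows "(\<forall>j\<in>I. c j > 0) \<Longrightarrow> F \<in> borel_measurable (PiM I (\<lambda>_. lborel)) \<Longrightarrow>
    (\<integral>\<^sup>+v. F v \<partial>PiM I (\<lambda>_. lborel)) = ennreal (\<Prod>j\<in>I. c j) * (\<integral>\<^sup>+u. F (\<lambda>j\<in>I. c j * u j) \<partial>PiM I (\<lambda>_. lborel))"
  using assms
proof (induction I arbitrary: F rule: finite_induct)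
  case empty
  then show ?case by (simp add: PiM_empty nn_integral_count_space_finite)
next
  case (insert i I)
  note [measurable] = insert.prems(2)
  interpret product_sigma_finite "\<lambda>_. lborel::real measure" by standard
  have ci: "c i > 0" using insert by auto
  have m: "(\<lambda>p. (fst p)(i := c i * snd p)) \<in> measurable (PiM I (\<lambda>_. lborel) \<Otimes>\<^sub>M lborel) (PiM (insert i I) (\<lambda>_. lborel))"
    by (rule measurable_fun_upd[where J=I]) auto
  have mF: "(\<lambda>(x,y). F (x(i := c i * y))) \<in> borel_measurable (PiM I (\<lambda>_. lborel) \<Otimes>\<^sub>M lborel)"
    using measurable_compose[OF m insert.prems(2)] by (simp add: case_prod_beta')
  have mPhi[measurable]: "(\<lambda>x. \<integral>\<^sup>+ y. F (x(i := c i * y)) \<partial>lborel) \<in> borel_measurable (PiM I (\<lambda>_. lborel))"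
    using lborel.borel_measurable_nn_integral[OF mF] by simp
  have "(\<integral>\<^sup>+v. F v \<partial>PiM (insert i I) (\<lambda>_. lborel)) =
     (\<integral>\<^sup>+ x. (\<integral>\<^sup>+ y. F (x(i := y)) \<partial>lborel) \<partial>PiM I (\<lambda>_. lborel))"
    by (rule product_nn_integral_insert) (use insert in auto)
  also have "\<dots> = (\<integral>\<^sup>+ x. ennreal (c i) * (\<integral>\<^sup>+ y. F (x(i := c i * y)) \<partial>lborel) \<partial>PiM I (\<lambda>_. lborel))"
    apply (rule nn_integral_cong)
    apply (rule scale1[OF ci])
    using measurable_compose[OF measurable_component_update insert.prems(2)] insert.hyps
    by auto
  also have "\<dots> = ennreal (c i) * (\<integral>\<^sup>+ x. (\<integral>\<^sup>+ y. F (x(i := c i * y)) \<partial>lborel) \<partial>PiM I (\<lambda>_. lborel))"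
    by (rule nn_integral_cmult) measurable
  also have "(\<integral>\<^sup>+ x. (\<integral>\<^sup>+ y. F (x(i := c i * y)) \<partial>lborel) \<partial>PiM I (\<lambda>_. lborel))
     = ennreal (\<Prod>j\<in>I. c j) * (\<integral>\<^sup>+u. (\<integral>\<^sup>+ y. F ((\<lambda>j\<in>I. c j * u j)(i := c i * y)) \<partial>lborel) \<partial>PiM I (\<lambda>_. lborel))"
    apply (rule insert.IH) using insert.prems apply simp by (rule mPhi)
  also have "(\<integral>\<^sup>+u. (\<integral>\<^sup>+ y. F ((\<lambda>j\<in>I. c j * u j)(i := c i * y)) \<partial>lborel) \<partial>PiM I (\<lambda>_. lborel))
     = (\<integral>\<^sup>+u. (\<integral>\<^sup>+ y. F (\<lambda>j\<in>insert i I. c j * (u(i:=y)) j) \<partial>lborel) \<partial>PiM I (\<lambda>_. lborel))"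
    apply (intro nn_integral_cong arg_cong[where f=F] ext)
    using insert by auto
  also have "\<dots> = (\<integral>\<^sup>+u. F (\<lambda>j\<in>insert i I. c j * u j) \<partial>PiM (insert i I) (\<lambda>_. lborel))"
    by (rule product_nn_integral_insert[symmetric]) (use insert in auto)
  finally show ?case using insert
    by (simp add: ennreal_mult mult.assoc prod_nonneg less_imp_le restrict_def)
qed

definition Dp :: "nat \<Rightarrow> (nat \<Rightarrow> real) \<Rightarrow> (nat \<Rightarrow> real) \<Rightarrow> real" where
 "Dp k \<alpha> x = (if (\<forall>j\<in>{1..k}. 0 < x j) \<and> (\<Sum>j=1..k. x j) < 1
    then (\<Prod>j=1..k. x j powr (\<alpha> j - 1)) * (1 - (\<Sum>j=1..k. x j)) powr (\<alpha> (k+1) - 1) else 0)"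

definition Bp :: "real \<Rightarrow> real \<Rightarrow> real \<Rightarrow> real" where
 "Bp a b t = (if 0 < t \<and> t < 1 then t powr (a - 1) * (1 - t) powr (b - 1) else 0)"

lemma Dp_meas[measurable]: "Dp k \<alpha> \<in> borel_measurable (lebk k)"
  unfolding Dp_def by measurable

lemma Bp_meas[measurable]: "(\<lambda>t. Bp a b t) \<in> borel_measurable borel"
  unfolding Bp_def by measurable

lemma diry_meas[measurable]: "(\<lambda>x. dir_y x j) \<in> borel_measurable (lebk k)" if "j \<in> {1..k}"
  unfolding dir_y_def apply measurable using that by auto

lemma diry_restr_meas[measurable]: "(\<lambda>x. restrict (dir_y x) {1..k}) \<in> measurable (lebk k) (lebk k)"
  apply (rule measurable_restrict) apply (subst measurable_cong_sets[OF refl sets_lborel]) by (rule diry_meas) auto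

lemma lebk_Suc: "lebk (Suc k) = PiM (insert (Suc k) {1..k}) (\<lambda>_. lborel)"
  by (simp add: atLeastAtMostSuc_conv)

lemma upd_sum: "(\<Sum>j=1..k. (x(Suc k := t)) j) = (\<Sum>j=1..k. x j)"
  by (rule sum.cong) auto

lemma upd_sumS: "(\<Sum>j=1..Suc k. (x(Suc k := t)) j) = (\<Sum>j=1..k. x j) + t"
  by (simp add: upd_sum)

lemma upd_prodS: "(\<Prod>j=1..Suc k. (x(Suc k := t)) j powr (\<alpha> j - 1)) = (\<Prod>j=1..k. x j powr (\<alpha> j - 1)) * t powr (\<alpha> (Suc k) - 1)"
proof -
  have "(\<Prod>j=1..k. (x(Suc k := t)) j powr (\<alpha> j - 1)) = (\<Prod>j=1..k. x j powr (\<alpha> j - 1))"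
    by (rule prod.cong) auto
  then show ?thesis by simp
qed

lemma upd_diry: "restrict (dir_y (x(Suc k := t))) {1..Suc k} = (restrict (dir_y x) {1..k})(Suc k := t / (1 - (\<Sum>j=1..k. x j)))"
proof
  fix j show "restrict (dir_y (x(Suc k := t))) {1..Suc k} j = ((restrict (dir_y x) {1..k})(Suc k := t / (1 - (\<Sum>j=1..k. x j)))) j"
  proof (cases "j = Suc k")
    case True
    have "(\<Sum>i\<in>{1..<Suc k}. (x(Suc k := t)) i) = (\<Sum>j=1..k. x j)"
      by (metis atLeastLessThanSuc_atLeastAtMost upd_sum)
    then show ?thesis using True by (simp add: dir_y_def)
  next
    case False
    have "(\<Sum>i\<in>{1..<j}. (x(Suc k := t)) i) = (\<Sum>i\<in>{1..<j}. x i)" if "j \<le> k"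
      by (rule sum.cong) (use that in auto)
    then show ?thesis using False by (auto simp add: dir_y_def)
  qed
qed

lemma dir_beta_upd:
  assumes "j \<in> {1..k}"
  shows "dir_beta k (\<alpha>(Suc k := \<alpha> (Suc k) + \<alpha> (Suc (Suc k)))) j = dir_beta (Suc k) \<alpha> j"
proof -
  have "(\<Sum>i=j+1..k. (\<alpha>(Suc k := \<alpha> (Suc k) + \<alpha> (Suc (Suc k)))) i) = (\<Sum>i=j+1..k. \<alpha> i)"
    by (rule sum.cong) auto
  then show ?thesis using assms by (simp add: dir_beta_def sum.cl_ivl_Suc)
qed

lemma Dp_upd: "Dp (Suc k) \<alpha> (x(Suc k := t)) = (if (\<forall>j\<in>{1..k}. 0 < x j) \<and> 0 < t \<and> (\<Sum>j=1..k. x j) + t < 1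
   then (\<Prod>j=1..k. x j powr (\<alpha> j - 1)) * t powr (\<alpha> (Suc k) - 1) * (1 - ((\<Sum>j=1..k. x j) + t)) powr (\<alpha> (Suc (Suc k)) - 1) else 0)"
proof -
  have "(\<forall>j\<in>{1..Suc k}. 0 < (x(Suc k := t)) j) \<longleftrightarrow> (\<forall>j\<in>{1..k}. 0 < x j) \<and> 0 < t"
    by (auto simp add: atLeastAtMostSuc_conv)
  then show ?thesis unfolding Dp_def by (simp only: upd_sumS upd_prodS) simp
qed

lemma inner:
  fixes H :: "(nat\<Rightarrow>real) \<Rightarrow> ennreal"
  assumes R: "\<forall>j\<in>{1..k}. 0 < x j" "(\<Sum>j=1..k. x j) < 1"
    and Hm: "(\<lambda>s. H (Y(Suc k := s))) \<in> borel_measurable borel"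
  shows "(\<integral>\<^sup>+t. ennreal (Dp (Suc k) \<alpha> (x(Suc k := t))) * H (Y(Suc k := t / (1 - (\<Sum>j=1..k. x j)))) \<partial>lborel)
   = ennreal (Dp k (\<alpha>(Suc k := \<alpha> (Suc k) + \<alpha> (Suc (Suc k)))) x) *
     (\<integral>\<^sup>+s. ennreal (Bp (\<alpha> (Suc k)) (\<alpha> (Suc (Suc k))) s) * H (Y(Suc k := s)) \<partial>lborel)"
proof -
  define S where "S = (\<Sum>j=1..k. x j)"
  define c where "c = 1 - S"
  define a where "a = \<alpha> (Suc k)"
  define b where "b = \<alpha> (Suc (Suc k))"
  define P where "P = (\<Prod>j=1..k. x j powr (\<alpha> j - 1))"
  have c: "c > 0" using R by (simp add: c_def S_def)
  have P0: "P \<ge> 0" unfolding P_def by (intro prod_nonneg) auto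
  have Pa: "(\<Prod>j=1..k. x j powr ((\<alpha>(Suc k := a + b)) j - 1)) = P"
    unfolding P_def by (rule prod.cong) auto
  have Dk: "Dp k (\<alpha>(Suc k := a + b)) x = P * c powr (a + b - 1)"
    using R Pa by (simp add: Dp_def S_def c_def)
  have pt: "ennreal (Dp (Suc k) \<alpha> (x(Suc k := c * s))) * H (Y(Suc k := c * s / c))
      = ennreal (P * c powr (a + b - 2)) * (ennreal (Bp a b s) * H (Y(Suc k := s)))" for s
  proof (cases "0 < s \<and> s < 1")
    case True
    have e1: "(c * s) powr (a - 1) = c powr (a - 1) * s powr (a - 1)"
      using c True by (simp add: powr_mult)
    have e2: "(1 - (S + c * s)) powr (b - 1) = c powr (b - 1) * (1 - s) powr (b - 1)"
    proof -
      have "1 - (S + c * s) = c * (1 - s)" by (simp add: c_def algebra_simps)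
      then show ?thesis using c True by (simp add: powr_mult)
    qed
    have e3: "c powr (a + b - 2) = c powr (a - 1) * c powr (b - 1)"
      using c by (simp add: powr_add[symmetric])
    have "c * s < c" using c True by simp
    then have cs: "S + c * s < 1" by (simp add: c_def)
    have cond: "(\<forall>j\<in>{1..Suc k}. 0 < (x(Suc k := c * s)) j) \<and> (\<Sum>j=1..Suc k. (x(Suc k := c * s)) j) < 1"
      using R True c cs by (auto simp add: upd_sumS S_def le_Suc_eq)
    have "Dp (Suc k) \<alpha> (x(Suc k := c * s)) = P * (c * s) powr (a - 1) * (1 - (S + c * s)) powr (b - 1)"
      using cond unfolding Dp_def by (simp only: if_True upd_sumS upd_prodS P_def a_def b_def S_def) simp
    also have "\<dots> = P * c powr (a + b - 2) * Bp a b s"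
      using True by (simp add: e1 e2 e3 Bp_def)
    finally have "Dp (Suc k) \<alpha> (x(Suc k := c * s)) = (P * c powr (a + b - 2)) * Bp a b s" .
    moreover have "Bp a b s \<ge> 0" by (simp add: Bp_def)
    moreover have "P * c powr (a + b - 2) \<ge> 0" using P0 by simp
    ultimately show ?thesis using c by (simp add: ennreal_mult mult.assoc[symmetric] del: mult_nonneg_nonneg)
  next
    case False
    have "\<not> ((\<forall>j\<in>{1..Suc k}. 0 < (x(Suc k := c * s)) j) \<and> (\<Sum>j=1..Suc k. (x(Suc k := c * s)) j) < 1)"
    proof
      assume h: "(\<forall>j\<in>{1..Suc k}. 0 < (x(Suc k := c * s)) j) \<and> (\<Sum>j=1..Suc k. (x(Suc k := c * s)) j) < 1"
      have "Suc k \<in> {1..Suc k}" by simp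
      with h have "0 < (x(Suc k := c * s)) (Suc k)" by blast
      then have "0 < c * s" by simp
      then have "0 < s" using c by (simp add: zero_less_mult_iff)
      moreover have "S + c * s < 1" using h by (simp add: upd_sumS S_def)
      then have "c * s < c * 1" by (simp add: c_def)
      then have "s < 1" using c by simp
      ultimately show False using False by simp
    qed
    then have "Dp (Suc k) \<alpha> (x(Suc k := c * s)) = 0" unfolding Dp_def by (rule if_not_P)
    moreover have "Bp a b s = 0" using False by (simp add: Bp_def)
    ultimately show ?thesis by simp
  qed
  have "(\<integral>\<^sup>+t. ennreal (Dp (Suc k) \<alpha> (x(Suc k := t))) * H (Y(Suc k := t / c)) \<partial>lborel)
      = ennreal c * (\<integral>\<^sup>+s. ennreal (Dp (Suc k) \<alpha> (x(Suc k := c * s))) * H (Y(Suc k := c * s / c)) \<partial>lborel)"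
  proof (rule scale1[OF c])
    have m1: "(\<lambda>t. Dp (Suc k) \<alpha> (x(Suc k := t))) \<in> borel_measurable borel"
      unfolding Dp_upd by measurable
    have m2: "(\<lambda>t. H (Y(Suc k := t / c))) \<in> borel_measurable borel"
      using measurable_compose[OF _ Hm, of "\<lambda>t. t / c"] by simp
    show "(\<lambda>t. ennreal (Dp (Suc k) \<alpha> (x(Suc k := t))) * H (Y(Suc k := t / c))) \<in> borel_measurable borel"
      using m1 m2 by measurable
  qed
  also have "\<dots> = ennreal c * (\<integral>\<^sup>+s. ennreal (P * c powr (a + b - 2)) * (ennreal (Bp a b s) * H (Y(Suc k := s))) \<partial>lborel)"
    by (simp only: pt)
  also have "\<dots> = ennreal c * (ennreal (P * c powr (a + b - 2)) * (\<integral>\<^sup>+s. ennreal (Bp a b s) * H (Y(Suc k := s)) \<partial>lborel))"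
    by (subst nn_integral_cmult) (use Hm in auto)
  also have "\<dots> = ennreal (P * c powr (a + b - 1)) * (\<integral>\<^sup>+s. ennreal (Bp a b s) * H (Y(Suc k := s)) \<partial>lborel)"
  proof -
    have eq: "c * (P * c powr (a + b - 2)) = P * c powr (a + b - 1)"
    proof -
      have "c powr (a + b - 1) = c powr ((a + b - 2) + 1)" by simp
      also have "\<dots> = c powr (a + b - 2) * c" by (subst powr_add) (use c in simp)
      finally show ?thesis by simp
    qed
    have cm: "ennreal c * ennreal (P * c powr (a+b-2)) = ennreal (c * (P * c powr (a + b - 2)))"
      by (rule ennreal_mult[symmetric]) (use c P0 in auto)
    show ?thesis by (subst mult.assoc[symmetric]) (simp only: cm eq)
  qed
  finally have fin: "(\<integral>\<^sup>+t. ennreal (Dp (Suc k) \<alpha> (x(Suc k := t))) * H (Y(Suc k := t / c)) \<partial>lborel) = ennreal (P * c powr (a + b - 1)) * (\<integral>\<^sup>+s. ennreal (Bp a b s) * H (Y(Suc k := s)) \<partial>lborel)" .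
  show ?thesis using fin unfolding Dk[unfolded a_def b_def] a_def b_def c_def S_def .
qed

lemma insert_Suc_eq: "insert (Suc k) {1..k} = {1..Suc k}" by auto

lemma upd_meas1:
  assumes [measurable]: "H \<in> borel_measurable (lebk (Suc k))" and y: "y \<in> space (lebk k)"
  shows "(\<lambda>s. H (y(Suc k := s))) \<in> borel_measurable borel"
proof -
  have "(\<lambda>s. y(Suc k := s)) \<in> measurable lborel (PiM (insert (Suc k) {1..k}) (\<lambda>_. lborel))"
    by (rule measurable_component_update) (use y in auto)
  then have "(\<lambda>s. y(Suc k := s)) \<in> measurable borel (lebk (Suc k))"
    by (simp only: insert_Suc_eq measurable_lborel2)
  from measurable_compose[OF this assms(1)] show ?thesis .
qed

lemma upd_meas:
  assumes [measurable]: "H \<in> borel_measurable (lebk (Suc k))"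
  shows "(\<lambda>(y, s). H (y(Suc k := s))) \<in> borel_measurable (lebk k \<Otimes>\<^sub>M lborel)"
proof -
  have "(\<lambda>(y, s). y(Suc k := s)) \<in> measurable (lebk k \<Otimes>\<^sub>M lborel) (PiM (insert (Suc k) {1..k}) (\<lambda>_. lborel))"
    by (rule measurable_add_dim)
  then have "(\<lambda>(y, s). y(Suc k := s)) \<in> measurable (lebk k \<Otimes>\<^sub>M lborel) (lebk (Suc k))"
    by (simp only: insert_Suc_eq)
  from measurable_compose[OF this assms] show ?thesis by (simp add: case_prod_beta')
qed

lemma dirichlet_y:
  fixes H :: "(nat\<Rightarrow>real) \<Rightarrow> ennreal"
  shows "H \<in> borel_measurable (lebk k) \<Longrightarrow>
    (\<integral>\<^sup>+x. ennreal (Dp k \<alpha> x) * H (restrict (dir_y x) {1..k}) \<partial>lebk k)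
    = (\<integral>\<^sup>+y. ennreal (\<Prod>j=1..k. Bp (\<alpha> j) (dir_beta k \<alpha> j) (y j)) * H y \<partial>lebk k)"
proof (induction k arbitrary: \<alpha> H)
  case 0
  have e: "restrict (dir_y x) {} = x" if "x \<in> {\<lambda>_. undefined}" for x using that by auto
  show ?case by (simp add: PiM_empty nn_integral_count_space_finite Dp_def e)
next
  case (Suc k)
  note Hm[measurable] = Suc.prems
  interpret product_sigma_finite "\<lambda>_. lborel::real measure" by standard
  define \<alpha>' where "\<alpha>' = \<alpha>(Suc k := \<alpha> (Suc k) + \<alpha> (Suc (Suc k)))"
  define Hk where "Hk y = (\<integral>\<^sup>+s. ennreal (Bp (\<alpha> (Suc k)) (\<alpha> (Suc (Suc k))) s) * H (y(Suc k := s)) \<partial>lborel)" for y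
  have m1: "(\<lambda>(y, s). ennreal (Bp (\<alpha> (Suc k)) (\<alpha> (Suc (Suc k))) s) * H (y(Suc k := s))) \<in> borel_measurable (lebk k \<Otimes>\<^sub>M lborel)"
    using upd_meas[OF Hm] by measurable
  have Hkm[measurable]: "Hk \<in> borel_measurable (lebk k)"
    unfolding Hk_def using lborel.borel_measurable_nn_integral[OF m1] by simp
  have "(\<integral>\<^sup>+x. ennreal (Dp (Suc k) \<alpha> x) * H (restrict (dir_y x) {1..Suc k}) \<partial>lebk (Suc k))
     = (\<integral>\<^sup>+x. (\<integral>\<^sup>+t. ennreal (Dp (Suc k) \<alpha> (x(Suc k := t))) * H (restrict (dir_y (x(Suc k := t))) {1..Suc k}) \<partial>lborel) \<partial>lebk k)"
    unfolding lebk_Suc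
    apply (rule product_nn_integral_insert) apply simp apply simp unfolding insert_Suc_eq by measurable
  also have "\<dots> = (\<integral>\<^sup>+x. ennreal (Dp k \<alpha>' x) * Hk (restrict (dir_y x) {1..k}) \<partial>lebk k)"
  proof (rule nn_integral_cong)
    fix x assume x: "x \<in> space (lebk k)"
    show "(\<integral>\<^sup>+t. ennreal (Dp (Suc k) \<alpha> (x(Suc k := t))) * H (restrict (dir_y (x(Suc k := t))) {1..Suc k}) \<partial>lborel)
       = ennreal (Dp k \<alpha>' x) * Hk (restrict (dir_y x) {1..k})"
    proof (cases "(\<forall>j\<in>{1..k}. 0 < x j) \<and> (\<Sum>j=1..k. x j) < 1")
      case True
      have hm: "(\<lambda>s. H ((restrict (dir_y x) {1..k})(Suc k := s))) \<in> borel_measurable borel"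
        by (rule upd_meas1[OF Hm]) (auto simp: space_PiM)
      show ?thesis unfolding upd_diry Hk_def \<alpha>'_def
        by (rule inner[OF _ _ hm]) (use True in auto)
    next
      case False
      have "Dp (Suc k) \<alpha> (x(Suc k := t)) = 0" for t
        using False by (auto simp add: Dp_upd)
      moreover have "Dp k \<alpha>' x = 0" unfolding Dp_def by (rule if_not_P[OF False])
      ultimately show ?thesis by simp
    qed
  qed
  also have "\<dots> = (\<integral>\<^sup>+y. ennreal (\<Prod>j=1..k. Bp (\<alpha>' j) (dir_beta k \<alpha>' j) (y j)) * Hk y \<partial>lebk k)"
    by (rule Suc.IH) (rule Hkm)
  also have "\<dots> = (\<integral>\<^sup>+y. (\<integral>\<^sup>+s. ennreal (\<Prod>j=1..Suc k. Bp (\<alpha> j) (dir_beta (Suc k) \<alpha> j) ((y(Suc k := s)) j)) * H (y(Suc k := s)) \<partial>lborel) \<partial>lebk k)"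
  proof (rule nn_integral_cong)
    fix y assume y: "y \<in> space (lebk k)"
    have pe: "(\<Prod>j=1..k. Bp (\<alpha>' j) (dir_beta k \<alpha>' j) (y j)) = (\<Prod>j=1..k. Bp (\<alpha> j) (dir_beta (Suc k) \<alpha> j) (y j))"
      by (rule prod.cong) (auto simp: \<alpha>'_def dir_beta_upd)
    have db: "dir_beta (Suc k) \<alpha> (Suc k) = \<alpha> (Suc (Suc k))" by (simp add: dir_beta_def)
    have p0: "(\<Prod>j=1..k. Bp (\<alpha> j) (dir_beta (Suc k) \<alpha> j) (y j)) \<ge> 0"
      by (intro prod_nonneg) (simp add: Bp_def)
    have b0: "Bp a b s \<ge> 0" for a b s by (simp add: Bp_def)
    have "ennreal (\<Prod>j=1..k. Bp (\<alpha>' j) (dir_beta k \<alpha>' j) (y j)) * Hk y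
       = (\<integral>\<^sup>+s. ennreal (\<Prod>j=1..k. Bp (\<alpha>' j) (dir_beta k \<alpha>' j) (y j)) * (ennreal (Bp (\<alpha> (Suc k)) (\<alpha> (Suc (Suc k))) s) * H (y(Suc k := s))) \<partial>lborel)"
      unfolding Hk_def
      by (rule nn_integral_cmult[symmetric]) (use upd_meas1[OF Hm y] in measurable)
    also have "\<dots> = (\<integral>\<^sup>+s. ennreal (\<Prod>j=1..Suc k. Bp (\<alpha> j) (dir_beta (Suc k) \<alpha> j) ((y(Suc k := s)) j)) * H (y(Suc k := s)) \<partial>lborel)"
    proof (rule nn_integral_cong)
      fix s
      show "ennreal (\<Prod>j=1..k. Bp (\<alpha>' j) (dir_beta k \<alpha>' j) (y j)) * (ennreal (Bp (\<alpha> (Suc k)) (\<alpha> (Suc (Suc k))) s) * H (y(Suc k := s)))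
        = ennreal (\<Prod>j=1..Suc k. Bp (\<alpha> j) (dir_beta (Suc k) \<alpha> j) ((y(Suc k := s)) j)) * H (y(Suc k := s))"
        unfolding pe using p0 b0 by (simp add: db ennreal_mult mult.assoc)
    qed
    finally show "ennreal (\<Prod>j=1..k. Bp (\<alpha>' j) (dir_beta k \<alpha>' j) (y j)) * Hk y = \<dots>" .
  qed
  also have "\<dots> = (\<integral>\<^sup>+y. ennreal (\<Prod>j=1..Suc k. Bp (\<alpha> j) (dir_beta (Suc k) \<alpha> j) (y j)) * H y \<partial>lebk (Suc k))"
    unfolding lebk_Suc
    apply (rule product_nn_integral_insert[symmetric]) apply simp apply simp unfolding insert_Suc_eq by measurable
  finally show ?case .
qed

lemma coord_id:
  fixes u v a b :: real assumes "0 < v" "v < u"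
  shows "(1/u) * (Bp a b (v/u) * (v/u)) = u powr (-a-b) * ((u-v) powr (b-1) * v powr a)"
proof -
  have u: "u > 0" using assms by simp
  have vu: "0 < v/u" "v/u < 1" using assms by auto
  have e1: "1 - v/u = (u-v)/u" using u by (simp add: field_simps)
  have "(1/u) * (Bp a b (v/u) * (v/u)) = (1/u) * ((v/u) powr (a-1) * ((u-v)/u) powr (b-1) * (v/u))"
    using vu by (simp add: Bp_def e1)
  also have "\<dots> = (v powr (a-1) * v) * (u-v) powr (b-1) / (u powr (a-1) * u powr (b-1) * u * u)"
    using assms u by (simp add: powr_divide field_simps)
  also have "v powr (a-1) * v = v powr a"
    using assms by (simp add: powr_diff)
  also have "u powr (a-1) * u powr (b-1) * u * u = u powr (a+b)"
    using u by (simp add: powr_diff powr_add field_simps)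
  also have "v powr a * (u-v) powr (b-1) / u powr (a+b) = u powr (-a-b) * ((u-v) powr (b-1) * v powr a)"
  proof -
    have "u powr (-a-b) = 1 / u powr (a+b)" using u by (simp add: powr_minus_divide[symmetric])
    then show ?thesis by simp
  qed
  finally show ?thesis .
qed

lemma gamma_id:
  assumes "k \<ge> 1" "\<forall>j\<in>{1..k+1}. \<alpha> j > 0"
  shows "(\<Prod>j=1..k. Gamma (\<alpha> j) / Gamma (\<alpha> j + dir_beta k \<alpha> j)) * (Gamma (\<Sum>j=1..k+1. \<alpha> j) / (\<Prod>j=1..k+1. Gamma (\<alpha> j)))
     = (\<Prod>j=1..k. 1 / Gamma (dir_beta k \<alpha> j))"
proof -
  define s where "s j = (\<Sum>i=j..k+1. \<alpha> i)" for j
  have sp: "s j > 0" if "1 \<le> j" "j \<le> k+1" for j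
    unfolding s_def using assms that by (intro sum_pos) auto
  have G0: "Gamma (s j) \<noteq> 0" if "1 \<le> j" "j \<le> k+1" for j
    using Gamma_real_pos[OF sp[OF that]] by simp
  have ab: "\<alpha> j + dir_beta k \<alpha> j = s j" if "j \<in> {1..k}" for j
    using that unfolding s_def dir_beta_def by (simp add: sum.atLeast_Suc_atMost)
  have bs: "dir_beta k \<alpha> j = s (Suc j)" for j unfolding s_def dir_beta_def by simp
  have s1: "s 1 = (\<Sum>j=1..k+1. \<alpha> j)" by (simp add: s_def)
  have sk: "s (k+1) = \<alpha> (k+1)" by (simp add: s_def)
  define P1 where "P1 = (\<Prod>j=1..k. Gamma (\<alpha> j))"
  define Ps where "Ps = (\<Prod>j=1..k. Gamma (s j))"
  define Pt where "Pt = (\<Prod>j=1..k. Gamma (s (Suc j)))"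
  have Ga0: "Gamma (\<alpha> j) \<noteq> 0" if "j \<in> {1..k+1}" for j
    using Gamma_real_pos[of "\<alpha> j"] assms that by force
  have P10: "P1 \<noteq> 0" unfolding P1_def using Ga0 by (auto simp: prod_zero_iff)
  have Ps0: "Ps \<noteq> 0" unfolding Ps_def using G0 by (auto simp: prod_zero_iff)
  have Pt0: "Pt \<noteq> 0" unfolding Pt_def using G0 by (auto simp: prod_zero_iff)
  have Gk: "Gamma (\<alpha> (k+1)) \<noteq> 0" using Ga0 by auto
  have e1: "(\<Prod>j=1..k+1. Gamma (\<alpha> j)) = P1 * Gamma (\<alpha> (k+1))" unfolding P1_def by simp
  have e2: "Ps * Gamma (\<alpha> (k+1)) = Gamma (s 1) * Pt"
  proof -
    have "Ps * Gamma (\<alpha> (k+1)) = (\<Prod>j=1..k+1. Gamma (s j))" unfolding Ps_def using sk by simp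
    also have "\<dots> = Gamma (s 1) * (\<Prod>j=Suc 1..Suc k. Gamma (s j))"
      by (subst prod.atLeast_Suc_atMost) auto
    also have "(\<Prod>j=Suc 1..Suc k. Gamma (s j)) = Pt" unfolding Pt_def
      by (rule prod.shift_bounds_cl_Suc_ivl)
    finally show ?thesis .
  qed
  have l: "(\<Prod>j=1..k. Gamma (\<alpha> j) / Gamma (\<alpha> j + dir_beta k \<alpha> j)) = P1 / Ps"
    unfolding P1_def Ps_def prod_dividef[symmetric] by (rule prod.cong) (auto simp: ab)
  have r: "(\<Prod>j=1..k. 1 / Gamma (dir_beta k \<alpha> j)) = 1 / Pt"
    unfolding Pt_def by (simp add: bs prod_dividef)
  have G1: "Gamma (s 1) \<noteq> 0" using G0[of 1] by simp
  show ?thesis unfolding l r e1 s1[symmetric] using P10 Ps0 Pt0 Gk e2 G1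
    by (simp add: field_simps)
qed

lemma dir_eq_Dp:
  assumes "k \<ge> 1"
  shows "dirichlet1_density k \<alpha> x = (Gamma (\<Sum>j=1..k+1. \<alpha> j) / (\<Prod>j=1..k+1. Gamma (\<alpha> j))) * Dp k \<alpha> x"
proof (cases "(\<forall>j\<in>{1..k}. 0 < x j) \<and> (\<Sum>j=1..k. x j) < 1")
  case True
  have "0 < (\<Sum>j=1..k. x j)" using True assms by (intro sum_pos) auto
  moreover have "x j < 1" if "j \<in> {1..k}" for j
  proof -
    have "x j \<le> (\<Sum>j=1..k. x j)" using True that by (intro member_le_sum) (auto simp: less_imp_le)
    then show ?thesis using True by simp
  qed
  ultimately show ?thesis using True unfolding dirichlet1_density_def Dp_def by auto
qed (auto simp: dirichlet1_density_def Dp_def)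

lemma Dp_nonneg: "Dp k \<alpha> x \<ge> 0"
  unfolding Dp_def by (auto intro!: prod_nonneg mult_nonneg_nonneg)

lemma diry_pos:
  assumes "\<forall>j\<in>{1..k}. 0 < x j" "(\<Sum>j=1..k. x j) < 1" "j \<in> {1..k}"
  shows "dir_y x j > 0"
proof -
  have "(\<Sum>i\<in>{1..<j}. x i) \<le> (\<Sum>j=1..k. x j)"
    using assms by (intro sum_mono2) (auto simp: less_imp_le)
  then show ?thesis using assms unfolding dir_y_def by (intro divide_pos_pos) auto
qed

lemma dirichlet_nonzero:
  assumes "k \<ge> 1" "dirichlet1_density k \<alpha> x \<noteq> 0"
  shows "(\<forall>j\<in>{1..k}. 0 < x j) \<and> (\<Sum>j=1..k. x j) < 1"
  using assms unfolding dir_eq_Dp[OF assms(1)] Dp_def by (auto split: if_splits)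

lemma phi_meas0: "(\<lambda>p. restrict (\<lambda>j. snd p j / dir_y (fst p) j) {1..k}) \<in> measurable (lebk k \<Otimes>\<^sub>M lebk k) (lebk k)"
proof (rule measurable_restrict)
  fix j assume j: "j \<in> {1..k}"
  have [measurable]: "(\<lambda>x. dir_y x j) \<in> borel_measurable (lebk k)" using diry_meas[OF j] .
  show "(\<lambda>p. snd p j / dir_y (fst p) j) \<in> measurable (lebk k \<Otimes>\<^sub>M lebk k) lborel"
    using j by measurable
qed

lemma phi_meas[measurable]: "(\<lambda>(x, v). restrict (\<lambda>j. v j / dir_y x j) {1..k}) \<in> measurable (lebk k \<Otimes>\<^sub>M lebk k) (lebk k)"
  using phi_meas0 by (simp add: case_prod_beta')

lemma scal_meas0: "(\<lambda>p. restrict (\<lambda>j. dir_y (snd p) j * fst p j) {1..k}) \<in> measurable (lebk k \<Otimes>\<^sub>M lebk k) (lebk k)"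
proof (rule measurable_restrict)
  fix j assume j: "j \<in> {1..k}"
  have [measurable]: "(\<lambda>x. dir_y x j) \<in> borel_measurable (lebk k)" using diry_meas[OF j] .
  show "(\<lambda>p. dir_y (snd p) j * fst p j) \<in> measurable (lebk k \<Otimes>\<^sub>M lebk k) lborel"
    using j by measurable
qed

lemma scal_meas[measurable]: "(\<lambda>(u, x). restrict (\<lambda>j. dir_y x j * u j) {1..k}) \<in> measurable (lebk k \<Otimes>\<^sub>M lebk k) (lebk k)"
  using scal_meas0 by (simp add: case_prod_beta')

lemma scal_meas2[measurable]: "(\<lambda>(x, u). restrict (\<lambda>j. dir_y x j * u j) {1..k}) \<in> measurable (lebk k \<Otimes>\<^sub>M lebk k) (lebk k)"
proof -
  have "(\<lambda>p. restrict (\<lambda>j. dir_y (fst p) j * snd p j) {1..k}) \<in> measurable (lebk k \<Otimes>\<^sub>M lebk k) (lebk k)"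
  proof (rule measurable_restrict)
    fix j assume j: "j \<in> {1..k}"
    have [measurable]: "(\<lambda>x. dir_y x j) \<in> borel_measurable (lebk k)" using diry_meas[OF j] .
    show "(\<lambda>p. dir_y (fst p) j * snd p j) \<in> measurable (lebk k \<Otimes>\<^sub>M lebk k) lborel"
      using j by measurable
  qed
  then show ?thesis by (simp add: case_prod_beta')
qed

lemma scal1_meas[measurable]: "(\<lambda>u. restrict (\<lambda>j. c j * u j) {1..k}) \<in> measurable (lebk k) (lebk k)"
  by (rule measurable_restrict) auto

lemma prody_meas[measurable]: "(\<lambda>x. \<Prod>j=1..k. dir_y x j) \<in> borel_measurable (lebk k)"
  by (rule borel_measurable_prod) (rule diry_meas)

theorem theorem2p4:
  fixes M :: "'a measure" and k :: nat and \<alpha> :: "nat \<Rightarrow> real"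
    and X V :: "'a \<Rightarrow> nat \<Rightarrow> real" and f g :: "(nat \<Rightarrow> real) \<Rightarrow> real"
  assumes "prob_space M"
    and "k \<ge> 1"
    and "\<forall>j\<in>{1..k+1}. \<alpha> j > 0"
    and "distributed M (lebk k) X (\<lambda>x. ennreal (dirichlet1_density k \<alpha> x))"
    and "\<forall>v. f v \<ge> 0"
    and "\<forall>v\<in>space (lebk k). (\<exists>j\<in>{1..k}. v j \<le> 0) \<longrightarrow> f v = 0"
    and "distributed M (lebk k) V (\<lambda>v. ennreal (f v))"
    and "prob_space.indep_var M (lebk k) X (lebk k) V"
    and "\<forall>u. g u \<ge> 0"
    and "distributed M (lebk k)
           (\<lambda>\<omega>. restrict (\<lambda>j. V \<omega> j / dir_y (X \<omega>) j) {1..k}) (\<lambda>u. ennreal (g u))"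
  shows "AE u in lebk k. (\<forall>j\<in>{1..k}. 0 < u j) \<longrightarrow>
           kober1 k \<alpha> (dir_beta k \<alpha>) f u
             = (\<Prod>j=1..k. Gamma (\<alpha> j) / Gamma (\<alpha> j + dir_beta k \<alpha> j)) * g u"
proof -
  interpret P: prob_space M by fact
  interpret PS: product_sigma_finite "\<lambda>_::nat. lborel::real measure" by standard
  have sfL: "sigma_finite_measure (lebk k)" by (rule PS.sigma_finite) simp
  interpret L: sigma_finite_measure "lebk k" by (rule sfL)
  interpret LL: pair_sigma_finite "lebk k" "lebk k" by (intro pair_sigma_finite.intro sfL)
  define D where "D = dirichlet1_density k \<alpha>"
  define F where "F v = ennreal (f v)" for v
  define C where "C = Gamma (\<Sum>j=1..k+1. \<alpha> j) / (\<Prod>j=1..k+1. Gamma (\<alpha> j))"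
  have C0: "C > 0" unfolding C_def using assms(3)
    by (intro divide_pos_pos Gamma_real_pos prod_pos sum_pos) auto
  have Fm[measurable]: "F \<in> borel_measurable (lebk k)"
    using distributed_borel_measurable[OF assms(7)] unfolding F_def .
  have Dm[measurable]: "(\<lambda>x. ennreal (D x)) \<in> borel_measurable (lebk k)"
    using distributed_borel_measurable[OF assms(4)] unfolding D_def .
  have J: "distributed M (lebk k \<Otimes>\<^sub>M lebk k) (\<lambda>\<omega>. (X \<omega>, V \<omega>)) (\<lambda>(x, v). ennreal (D x) * F v)"
    using P.distributed_joint_indep[OF sfL sfL assms(4) assms(7) assms(8)] unfolding D_def F_def by simp
  have JDm[measurable]: "(\<lambda>(x, v). ennreal (D x) * F v) \<in> borel_measurable (lebk k \<Otimes>\<^sub>M lebk k)"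
    using distributed_borel_measurable[OF J] .
  define \<phi> where "\<phi> = (\<lambda>(x, v). restrict (\<lambda>j. v j / dir_y x j) {1..k})"
  have \<phi>m[measurable]: "\<phi> \<in> measurable (lebk k \<Otimes>\<^sub>M lebk k) (lebk k)" unfolding \<phi>_def by measurable
  define G where "G u = (\<integral>\<^sup>+x. ennreal (D x) * (ennreal (\<Prod>j=1..k. dir_y x j) * F (restrict (\<lambda>j. dir_y x j * u j) {1..k})) \<partial>lebk k)" for u
  have m2: "(\<lambda>(u, x). F (restrict (\<lambda>j. dir_y x j * u j) {1..k})) \<in> borel_measurable (lebk k \<Otimes>\<^sub>M lebk k)"
    using measurable_compose[OF scal_meas Fm] by (simp add: case_prod_beta')
  have m3: "(\<lambda>(u, x). ennreal (D x) * (ennreal (\<Prod>j=1..k. dir_y x j) * F (restrict (\<lambda>j. dir_y x j * u j) {1..k}))) \<in> borel_measurable (lebk k \<Otimes>\<^sub>M lebk k)"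
    using m2 by measurable
  have Gm[measurable]: "G \<in> borel_measurable (lebk k)"
    using L.borel_measurable_nn_integral[OF m3] unfolding G_def by simp
  have perx: "(\<integral>\<^sup>+v. ennreal (D x) * F v * indicator A (\<phi> (x, v)) \<partial>lebk k)
     = (\<integral>\<^sup>+u. ennreal (D x) * (ennreal (\<Prod>j=1..k. dir_y x j) * F (restrict (\<lambda>j. dir_y x j * u j) {1..k})) * indicator A u \<partial>lebk k)"
    if x: "x \<in> space (lebk k)" and A: "A \<in> sets (lebk k)" for x A
  proof (cases "D x = 0")
    case True then show ?thesis by simp
  next
    case False
    then have cond: "(\<forall>j\<in>{1..k}. 0 < x j) \<and> (\<Sum>j=1..k. x j) < 1"
      using dirichlet_nonzero[OF assms(2)] unfolding D_def by blast
    have yp: "\<forall>j\<in>{1..k}. dir_y x j > 0" using diry_pos cond by blast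
    have yp0: "(\<Prod>j=1..k. dir_y x j) \<ge> 0" using yp by (intro prod_nonneg) (auto simp: less_imp_le)
    have px: "(\<lambda>v. \<phi> (x, v)) \<in> measurable (lebk k) (lebk k)"
      using measurable_compose[OF measurable_Pair1'[OF x] \<phi>m] .
    have mv: "(\<lambda>v. F v * indicator A (\<phi> (x, v))) \<in> borel_measurable (lebk k)"
      using px A by measurable
    have "(\<integral>\<^sup>+v. F v * indicator A (\<phi> (x, v)) \<partial>lebk k)
       = ennreal (\<Prod>j\<in>{1..k}. dir_y x j) * (\<integral>\<^sup>+u. F (\<lambda>j\<in>{1..k}. dir_y x j * u j) * indicator A (\<phi> (x, (\<lambda>j\<in>{1..k}. dir_y x j * u j))) \<partial>lebk k)"
      using scaleN[of "{1..k}" "dir_y x" "\<lambda>v. F v * indicator A (\<phi> (x, v))"] yp mv by simp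
    also have "(\<integral>\<^sup>+u. F (\<lambda>j\<in>{1..k}. dir_y x j * u j) * indicator A (\<phi> (x, (\<lambda>j\<in>{1..k}. dir_y x j * u j))) \<partial>lebk k)
       = (\<integral>\<^sup>+u. F (\<lambda>j\<in>{1..k}. dir_y x j * u j) * indicator A u \<partial>lebk k)"
    proof (rule nn_integral_cong)
      fix u assume u: "u \<in> space (lebk k)"
      have "\<phi> (x, (\<lambda>j\<in>{1..k}. dir_y x j * u j)) = u"
      proof
        fix j show "\<phi> (x, (\<lambda>j\<in>{1..k}. dir_y x j * u j)) j = u j"
          using u yp by (cases "j \<in> {1..k}") (force simp: \<phi>_def space_PiM PiE_def extensional_def)+
      qed
      then show "F (\<lambda>j\<in>{1..k}. dir_y x j * u j) * indicator A (\<phi> (x, (\<lambda>j\<in>{1..k}. dir_y x j * u j))) = F (\<lambda>j\<in>{1..k}. dir_y x j * u j) * indicator A u"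
        by simp
    qed
    finally have eq: "(\<integral>\<^sup>+v. F v * indicator A (\<phi> (x, v)) \<partial>lebk k) = ennreal (\<Prod>j\<in>{1..k}. dir_y x j) * (\<integral>\<^sup>+u. F (\<lambda>j\<in>{1..k}. dir_y x j * u j) * indicator A u \<partial>lebk k)" .
    have mu: "(\<lambda>u. F (\<lambda>j\<in>{1..k}. dir_y x j * u j) * indicator A u) \<in> borel_measurable (lebk k)"
      using measurable_compose[OF scal1_meas[of "dir_y x" k] Fm] A by measurable
    have "(\<integral>\<^sup>+v. ennreal (D x) * F v * indicator A (\<phi> (x, v)) \<partial>lebk k) = ennreal (D x) * (\<integral>\<^sup>+v. F v * indicator A (\<phi> (x, v)) \<partial>lebk k)"
      using mv by (subst nn_integral_cmult[symmetric]) (auto simp: mult.assoc)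
    also have "\<dots> = ennreal (D x) * (ennreal (\<Prod>j\<in>{1..k}. dir_y x j) * (\<integral>\<^sup>+u. F (\<lambda>j\<in>{1..k}. dir_y x j * u j) * indicator A u \<partial>lebk k))"
      by (simp only: eq)
    also have "\<dots> = (\<integral>\<^sup>+u. ennreal (D x) * (ennreal (\<Prod>j\<in>{1..k}. dir_y x j) * (F (\<lambda>j\<in>{1..k}. dir_y x j * u j) * indicator A u)) \<partial>lebk k)"
      using mu by (simp add: nn_integral_cmult)
    finally show ?thesis by (simp add: mult.assoc)
  qed
  have GD: "distributed M (lebk k) (\<lambda>\<omega>. restrict (\<lambda>j. V \<omega> j / dir_y (X \<omega>) j) {1..k}) G"
  proof -
    have XVm: "(\<lambda>\<omega>. (X \<omega>, V \<omega>)) \<in> measurable M (lebk k \<Otimes>\<^sub>M lebk k)"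
      using J by (rule distributed_measurable)
    have Ueq: "(\<lambda>\<omega>. restrict (\<lambda>j. V \<omega> j / dir_y (X \<omega>) j) {1..k}) = (\<lambda>\<omega>. \<phi> (X \<omega>, V \<omega>))"
      by (simp add: \<phi>_def)
    have Um: "(\<lambda>\<omega>. restrict (\<lambda>j. V \<omega> j / dir_y (X \<omega>) j) {1..k}) \<in> measurable M (lebk k)"
      using distributed_measurable[OF assms(10)] .
    have "distr M (lebk k) (\<lambda>\<omega>. \<phi> (X \<omega>, V \<omega>)) = distr (distr M (lebk k \<Otimes>\<^sub>M lebk k) (\<lambda>\<omega>. (X \<omega>, V \<omega>))) (lebk k) \<phi>"
      by (subst distr_distr[OF \<phi>m XVm]) (simp add: comp_def)
    also have "\<dots> = distr (density (lebk k \<Otimes>\<^sub>M lebk k) (\<lambda>(x, v). ennreal (D x) * F v)) (lebk k) \<phi>"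
      using distributed_distr_eq_density[OF J] by simp
    also have "\<dots> = density (lebk k) G"
    proof (rule measure_eqI)
      show "sets (distr (density (lebk k \<Otimes>\<^sub>M lebk k) (\<lambda>(x, v). ennreal (D x) * F v)) (lebk k) \<phi>) = sets (density (lebk k) G)"
        by simp
      fix A assume "A \<in> sets (distr (density (lebk k \<Otimes>\<^sub>M lebk k) (\<lambda>(x, v). ennreal (D x) * F v)) (lebk k) \<phi>)"
      then have A[measurable]: "A \<in> sets (lebk k)" by simp
      have "emeasure (distr (density (lebk k \<Otimes>\<^sub>M lebk k) (\<lambda>(x, v). ennreal (D x) * F v)) (lebk k) \<phi>) A
          = emeasure (density (lebk k \<Otimes>\<^sub>M lebk k) (\<lambda>(x, v). ennreal (D x) * F v)) (\<phi> -` A \<inter> space (lebk k \<Otimes>\<^sub>M lebk k))"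
        by (subst emeasure_distr) (use \<phi>m A in simp_all)
      also have "\<dots> = (\<integral>\<^sup>+p. (\<lambda>(x, v). ennreal (D x) * F v) p * indicator (\<phi> -` A \<inter> space (lebk k \<Otimes>\<^sub>M lebk k)) p \<partial>(lebk k \<Otimes>\<^sub>M lebk k))"
        by (rule emeasure_density[OF JDm]) (rule measurable_sets[OF \<phi>m A])
      also have "\<dots> = (\<integral>\<^sup>+p. (\<lambda>(x, v). ennreal (D x) * F v * indicator A (\<phi> (x, v))) p \<partial>(lebk k \<Otimes>\<^sub>M lebk k))"
        by (rule nn_integral_cong) (auto split: split_indicator)
      also have "\<dots> = (\<integral>\<^sup>+x. \<integral>\<^sup>+v. ennreal (D x) * F v * indicator A (\<phi> (x, v)) \<partial>lebk k \<partial>lebk k)"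
      proof -
        have m4: "(\<lambda>p. (\<lambda>(x, v). ennreal (D x) * F v) p * indicator A (\<phi> p)) \<in> borel_measurable (lebk k \<Otimes>\<^sub>M lebk k)"
          using JDm \<phi>m A by measurable
        show ?thesis using L.nn_integral_fst[OF m4] by (simp add: case_prod_beta')
      qed
      also have "\<dots> = (\<integral>\<^sup>+x. \<integral>\<^sup>+u. ennreal (D x) * (ennreal (\<Prod>j=1..k. dir_y x j) * F (restrict (\<lambda>j. dir_y x j * u j) {1..k})) * indicator A u \<partial>lebk k \<partial>lebk k)"
        by (rule nn_integral_cong) (rule perx, assumption, rule A)
      also have "\<dots> = (\<integral>\<^sup>+u. \<integral>\<^sup>+x. ennreal (D x) * (ennreal (\<Prod>j=1..k. dir_y x j) * F (restrict (\<lambda>j. dir_y x j * u j) {1..k})) * indicator A u \<partial>lebk k \<partial>lebk k)"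
      proof -
        have m5: "(\<lambda>(x, u). F (restrict (\<lambda>j. dir_y x j * u j) {1..k})) \<in> borel_measurable (lebk k \<Otimes>\<^sub>M lebk k)"
          using measurable_compose[OF scal_meas2 Fm] by (simp add: case_prod_beta')
        have m6: "(\<lambda>(x, u). ennreal (D x) * (ennreal (\<Prod>j=1..k. dir_y x j) * F (restrict (\<lambda>j. dir_y x j * u j) {1..k})) * indicator A u) \<in> borel_measurable (lebk k \<Otimes>\<^sub>M lebk k)"
          using m5 A by measurable
        show ?thesis by (rule LL.Fubini'[symmetric, OF m6])
      qed
      also have "\<dots> = (\<integral>\<^sup>+u. G u * indicator A u \<partial>lebk k)"
      proof (rule nn_integral_cong)
        fix u assume u: "u \<in> space (lebk k)"
        have "(\<lambda>x. (\<lambda>(u, x). ennreal (D x) * (ennreal (\<Prod>j=1..k. dir_y x j) * F (restrict (\<lambda>j. dir_y x j * u j) {1..k}))) (u, x)) \<in> borel_measurable (lebk k)"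
          using measurable_compose[OF measurable_Pair1'[OF u] m3] .
        then have m7: "(\<lambda>x. ennreal (D x) * (ennreal (\<Prod>j=1..k. dir_y x j) * F (restrict (\<lambda>j. dir_y x j * u j) {1..k}))) \<in> borel_measurable (lebk k)"
          by simp
        show "(\<integral>\<^sup>+x. ennreal (D x) * (ennreal (\<Prod>j=1..k. dir_y x j) * F (restrict (\<lambda>j. dir_y x j * u j) {1..k})) * indicator A u \<partial>lebk k) = G u * indicator A u"
          unfolding G_def by (rule nn_integral_multc[OF m7])
      qed
      also have "\<dots> = emeasure (density (lebk k) G) A"
        by (rule emeasure_density[symmetric, OF Gm A])
      finally show "emeasure (distr (density (lebk k \<Otimes>\<^sub>M lebk k) (\<lambda>(x, v). ennreal (D x) * F v)) (lebk k) \<phi>) A = emeasure (density (lebk k) G) A" .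
    qed
    finally show ?thesis unfolding distributed_def using Um Gm Ueq by simp
  qed
  have uniq: "AE u in lebk k. ennreal (g u) = G u"
    by (rule P.distributed_unique[OF assms(10) GD])
  show ?thesis
  proof (rule AE_mp[OF uniq], rule AE_I2, intro impI)
    fix u assume u: "u \<in> space (lebk k)" and gG: "ennreal (g u) = G u" and upos: "\<forall>j\<in>{1..k}. 0 < u j"
    define \<beta> where "\<beta> = dir_beta k \<alpha>"
    define H where "H y = ennreal (\<Prod>j=1..k. y j) * F (restrict (\<lambda>j. y j * u j) {1..k})" for y
    define Bq where "Bq y = ennreal (\<Prod>j=1..k. Bp (\<alpha> j) (\<beta> j) (y j))" for y
    define Q where "Q = (\<Prod>j=1..k. u j powr (- \<alpha> j - \<beta> j))"
    define S where "S = {v \<in> space (lebk k). \<forall>j\<in>{1..k}. 0 < v j \<and> v j < u j}"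
    define K where "K v = (\<Prod>j=1..k. (u j - v j) powr (\<beta> j - 1) * v j powr \<alpha> j) * f v" for v
    define N where "N = (\<integral>\<^sup>+v. ennreal (indicator S v * K v) \<partial>lebk k)"
    have fm[measurable]: "f \<in> borel_measurable (lebk k)"
      using Fm assms(5) unfolding F_def by simp
    have Sm[measurable]: "S \<in> sets (lebk k)" unfolding S_def by measurable
    have Km[measurable]: "K \<in> borel_measurable (lebk k)" unfolding K_def by measurable
    have K0: "K v \<ge> 0" for v unfolding K_def using assms(5) by (auto intro!: prod_nonneg mult_nonneg_nonneg)
    have Q0: "Q > 0" unfolding Q_def using upos by (auto intro!: prod_pos)
    have Hm[measurable]: "H \<in> borel_measurable (lebk k)"
    proof -
      have "(\<lambda>y. restrict (\<lambda>j. y j * u j) {1..k}) \<in> measurable (lebk k) (lebk k)"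
        by (rule measurable_restrict) auto
      from measurable_compose[OF this Fm] show ?thesis unfolding H_def by measurable
    qed
    have Bqm[measurable]: "Bq \<in> borel_measurable (lebk k)" unfolding Bq_def by measurable
    have s1: "G u = ennreal C * (\<integral>\<^sup>+x. ennreal (Dp k \<alpha> x) * H (restrict (dir_y x) {1..k}) \<partial>lebk k)"
    proof -
      have "G u = (\<integral>\<^sup>+x. ennreal C * (ennreal (Dp k \<alpha> x) * H (restrict (dir_y x) {1..k})) \<partial>lebk k)"
        unfolding G_def
      proof (rule nn_integral_cong)
        fix x
        have e1: "(\<Prod>j=1..k. restrict (dir_y x) {1..k} j) = (\<Prod>j=1..k. dir_y x j)" by simp
        have e2: "restrict (\<lambda>j. restrict (dir_y x) {1..k} j * u j) {1..k} = restrict (\<lambda>j. dir_y x j * u j) {1..k}"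
          by (rule restrict_ext) simp
        have "ennreal (D x) = ennreal C * ennreal (Dp k \<alpha> x)"
          unfolding D_def dir_eq_Dp[OF assms(2)] C_def[symmetric]
          using C0 Dp_nonneg by (simp add: ennreal_mult)
        then show "ennreal (D x) * (ennreal (\<Prod>j = 1..k. dir_y x j) * F (restrict (\<lambda>j. dir_y x j * u j) {1..k}))
          = ennreal C * (ennreal (Dp k \<alpha> x) * H (restrict (dir_y x) {1..k}))"
          unfolding H_def e1 e2 by (simp add: mult.assoc)
      qed
      also have "\<dots> = ennreal C * (\<integral>\<^sup>+x. ennreal (Dp k \<alpha> x) * H (restrict (dir_y x) {1..k}) \<partial>lebk k)"
        by (rule nn_integral_cmult) measurable
      finally show ?thesis .
    qed
    also have "\<dots> = ennreal C * (\<integral>\<^sup>+y. Bq y * H y \<partial>lebk k)"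
      unfolding Bq_def \<beta>_def by (subst dirichlet_y[OF Hm]) simp
    also have "(\<integral>\<^sup>+y. Bq y * H y \<partial>lebk k) = ennreal (\<Prod>j\<in>{1..k}. 1 / u j) *
        (\<integral>\<^sup>+v. Bq (\<lambda>j\<in>{1..k}. 1 / u j * v j) * H (\<lambda>j\<in>{1..k}. 1 / u j * v j) \<partial>lebk k)"
      apply (rule scaleN) apply simp using upos apply simp by measurable
    also have "ennreal (\<Prod>j\<in>{1..k}. 1 / u j) * (\<integral>\<^sup>+v. Bq (\<lambda>j\<in>{1..k}. 1 / u j * v j) * H (\<lambda>j\<in>{1..k}. 1 / u j * v j) \<partial>lebk k)
       = (\<integral>\<^sup>+v. ennreal (\<Prod>j\<in>{1..k}. 1 / u j) * (Bq (\<lambda>j\<in>{1..k}. 1 / u j * v j) * H (\<lambda>j\<in>{1..k}. 1 / u j * v j)) \<partial>lebk k)"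
      by (rule nn_integral_cmult[symmetric]) measurable
    also have "\<dots> = (\<integral>\<^sup>+v. ennreal Q * ennreal (indicator S v * K v) \<partial>lebk k)"
    proof (rule nn_integral_cong)
      fix v assume v: "v \<in> space (lebk k)"
      define w where "w = (\<lambda>j\<in>{1..k}. 1 / u j * v j)"
      have ew: "restrict (\<lambda>j. w j * u j) {1..k} = v"
      proof
        fix j show "restrict (\<lambda>j. w j * u j) {1..k} j = v j"
          using v upos by (cases "j \<in> {1..k}") (force simp: w_def space_PiM PiE_def extensional_def)+
      qed
      have Bqw: "Bq w = ennreal (\<Prod>j=1..k. Bp (\<alpha> j) (\<beta> j) (v j / u j))"
        unfolding Bq_def by (rule arg_cong[where f=ennreal], rule prod.cong) (auto simp: w_def)
      have Hw: "H w = ennreal (\<Prod>j=1..k. v j / u j) * ennreal (f v)"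
      proof -
        have "(\<Prod>j=1..k. w j) = (\<Prod>j=1..k. v j / u j)" by (rule prod.cong) (auto simp: w_def)
        then show ?thesis unfolding H_def ew F_def by simp
      qed
      have goal: "ennreal (\<Prod>j\<in>{1..k}. 1 / u j) * (Bq w * H w) = ennreal Q * ennreal (indicator S v * K v)"
      proof (cases "v \<in> S")
        case True
        then have vp: "\<forall>j\<in>{1..k}. 0 < v j \<and> v j < u j" unfolding S_def by auto
        have nn1: "(\<Prod>j\<in>{1..k}. 1 / u j) \<ge> 0" using upos by (auto intro!: prod_nonneg)
        have nn2: "(\<Prod>j=1..k. Bp (\<alpha> j) (\<beta> j) (v j / u j)) \<ge> 0" by (auto intro!: prod_nonneg simp: Bp_def)
        have nn3: "(\<Prod>j=1..k. v j / u j) \<ge> 0" using vp by (auto intro!: prod_nonneg simp: less_imp_le)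
        have nn4: "f v \<ge> 0" using assms(5) by simp
        have "(\<Prod>j\<in>{1..k}. 1 / u j) * ((\<Prod>j=1..k. Bp (\<alpha> j) (\<beta> j) (v j / u j)) * (\<Prod>j=1..k. v j / u j))
            = (\<Prod>j=1..k. (1 / u j) * (Bp (\<alpha> j) (\<beta> j) (v j / u j) * (v j / u j)))"
          by (simp only: prod.distrib)
        also have "\<dots> = (\<Prod>j=1..k. u j powr (- \<alpha> j - \<beta> j) * ((u j - v j) powr (\<beta> j - 1) * v j powr \<alpha> j))"
        proof (rule prod.cong[OF refl])
          fix j assume "j \<in> {1..k}"
          then have "0 < v j" "v j < u j" using vp by auto
          then show "(1 / u j) * (Bp (\<alpha> j) (\<beta> j) (v j / u j) * (v j / u j)) = u j powr (- \<alpha> j - \<beta> j) * ((u j - v j) powr (\<beta> j - 1) * v j powr \<alpha> j)"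
            by (rule coord_id)
        qed
        also have "\<dots> = Q * (\<Prod>j=1..k. (u j - v j) powr (\<beta> j - 1) * v j powr \<alpha> j)"
          unfolding Q_def by (simp add: prod.distrib)
        finally have re: "(\<Prod>j\<in>{1..k}. 1 / u j) * ((\<Prod>j=1..k. Bp (\<alpha> j) (\<beta> j) (v j / u j)) * (\<Prod>j=1..k. v j / u j)) * f v = Q * K v"
          unfolding K_def by (simp add: mult.assoc)
        have "ennreal (\<Prod>j\<in>{1..k}. 1 / u j) * (Bq w * H w)
           = ennreal ((\<Prod>j\<in>{1..k}. 1 / u j) * ((\<Prod>j=1..k. Bp (\<alpha> j) (\<beta> j) (v j / u j)) * (\<Prod>j=1..k. v j / u j)) * f v)"
          unfolding Bqw Hw using nn1 nn2 nn3 nn4 by (simp add: ennreal_mult mult.assoc)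
        also have "\<dots> = ennreal Q * ennreal (indicator S v * K v)"
          unfolding re using True Q0 K0 by (simp add: ennreal_mult)
        finally show ?thesis .
      next
        case False
        then obtain j where j: "j \<in> {1..k}" "\<not> (0 < v j \<and> v j < u j)" using v unfolding S_def by auto
        have uj: "u j > 0" using upos j by auto
        have "Bp (\<alpha> j) (\<beta> j) (v j / u j) = 0"
        proof -
          have "\<not> (0 < v j / u j \<and> v j / u j < 1)" using j uj by (auto simp: divide_less_eq zero_less_divide_iff)
          then show ?thesis unfolding Bp_def by (rule if_not_P)
        qed
        then have pz: "(\<Prod>j=1..k. Bp (\<alpha> j) (\<beta> j) (v j / u j)) = 0" using j by (intro prod_zero) auto
        have "Bq w = 0" by (simp only: Bqw pz ennreal_0)
        moreover have "indicator S v = (0::real)" using False by simp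
        ultimately show ?thesis by simp
      qed
      show "ennreal (\<Prod>j\<in>{1..k}. 1 / u j) * (Bq (\<lambda>j\<in>{1..k}. 1 / u j * v j) * H (\<lambda>j\<in>{1..k}. 1 / u j * v j))
         = ennreal Q * ennreal (indicator S v * K v)"
        using goal unfolding w_def .
    qed
    also have "\<dots> = ennreal Q * N" unfolding N_def by (rule nn_integral_cmult) measurable
    finally have GN: "G u = ennreal C * (ennreal Q * N)" .
    have Nfin: "N < \<infinity>"
    proof (rule ccontr)
      assume "\<not> N < \<infinity>"
      then have "N = \<infinity>" using less_top[of N] by simp
      then have "G u = \<infinity>" using GN C0 Q0 by (simp add: ennreal_mult_eq_top_iff)
      then show False using gG by simp
    qed
    have int: "integrable (lebk k) (\<lambda>v. indicator S v * K v)"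
    proof (rule integrableI_nonneg)
      show "(\<lambda>v. indicator S v * K v) \<in> borel_measurable (lebk k)" by measurable
      show "AE v in lebk k. 0 \<le> indicator S v * K v" using K0 by simp
      show "(\<integral>\<^sup>+v. ennreal (indicator S v * K v) \<partial>lebk k) < \<infinity>" using Nfin unfolding N_def .
    qed
    define I where "I = (\<integral>v. indicator S v * K v \<partial>lebk k)"
    have I0: "I \<ge> 0" unfolding I_def using K0 by (intro integral_nonneg_AE) auto
    have NI: "N = ennreal I" unfolding N_def I_def
      by (rule nn_integral_eq_integral[OF int]) (use K0 in auto)
    have "ennreal (g u) = ennreal (C * Q * I)"
      using gG GN NI C0 Q0 I0 by (simp add: ennreal_mult mult.assoc)
    then have gu: "g u = C * Q * I" using assms(9) C0 Q0 I0 by simp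
    have kob: "kober1 k \<alpha> (dir_beta k \<alpha>) f u = (\<Prod>j=1..k. u j powr (- \<alpha> j - \<beta> j) / Gamma (\<beta> j)) * I"
      unfolding kober1_def I_def set_lebesgue_integral_def S_def K_def \<beta>_def by simp
    have pr: "(\<Prod>j=1..k. u j powr (- \<alpha> j - \<beta> j) / Gamma (\<beta> j)) = Q * (\<Prod>j=1..k. 1 / Gamma (\<beta> j))"
      unfolding Q_def prod.distrib[symmetric] by simp
    show "kober1 k \<alpha> (dir_beta k \<alpha>) f u = (\<Prod>j=1..k. Gamma (\<alpha> j) / Gamma (\<alpha> j + dir_beta k \<alpha> j)) * g u"
    proof -
      have gi: "(\<Prod>j=1..k. Gamma (\<alpha> j) / Gamma (\<alpha> j + \<beta> j)) * C = (\<Prod>j=1..k. 1 / Gamma (\<beta> j))"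
        using gamma_id[OF assms(2,3)] unfolding C_def \<beta>_def .
      show ?thesis unfolding \<beta>_def[symmetric] kob[folded \<beta>_def] pr gu gi[symmetric] by (simp add: mult_ac)
    qed
  qed
qed

end
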